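(* If $\dim\mathcal H=\dim\mathcal J=\infty$, then $\sup\{\|D\|_\wedge: D\in\hat{\mathcal S}(\mathcal H\otimes\mathcal J)\}=+\infty$; consequently the Hermitian projective norm $\|\cdot\|_{\wedge,sa}$ is also unbounded on $\hat{\mathcal S}(\mathcal H\otimes\mathcal J)$.
   Context: $\mathcal H,\mathcal J$ separable complex Hilbert spaces; $\mathcal T(\cdot)$ trace class, trace norm $\|\cdot\|_1$. A standard decomposition of $C\in\mathcal T(\mathcal H\otimes\mathcal J)$ is $C=\sum_k r_kX_k\otimes Y_k$ (trace-norm convergent), $r_k\ge0$, $\sum r_k<\infty$, $\|X_k\|_1\|Y_k\|_1=1$; the cross trace class is the set of $C$ admitting one; $\|C\|_\wedge=\inf\sum r_k$ (projective norm); $\|C\|_{\wedge,sa}$ is the same infimum restricted to decompositions with selfadjoint $X_k,Y_k$ (for selfadjoint $C$), and satisfies $\|C\|_{\wedge,sa}\ge\|C\|_\wedge$. $\hat{\mathcal S}(\mathcal H\otimes\mathcal J)$ (cross states) is the set of density operators on $\mathcal H\otimes\mathcal J$ belonging to the cross trace class. *)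

theory Defs
  imports "HOL-Analysis.Analysis"
begin

text \<open>Concrete model: a separable Hilbert space with orthonormal basis indexed by a
countable type 'i is l2('i). Operators are represented by their matrices
'i \<Rightarrow> 'i \<Rightarrow> complex with respect to this basis.\<close>

type_synonym 'i mat = "'i \<Rightarrow> 'i \<Rightarrow> complex"

definition contraction_on :: "'i set \<Rightarrow> 'i mat \<Rightarrow> bool" where
  "contraction_on F b \<longleftrightarrow>
     (\<forall>i j. (i \<notin> F \<or> j \<notin> F) \<longrightarrow> b i j = 0) \<and>
     (\<forall>x. (\<Sum>i\<in>F. (cmod (\<Sum>j\<in>F. b i j * x j))^2) \<le> (\<Sum>j\<in>F. (cmod (x j))^2))"

text \<open>Trace norm by duality: sup of |tr(AB)| over finite-rank contractions B.\<close>
definition tn_set :: "'i mat \<Rightarrow> real set" where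
  "tn_set a = {cmod (\<Sum>i\<in>F. \<Sum>j\<in>F. a i j * b j i) | F b. finite F \<and> contraction_on F b}"

definition trace_class :: "'i mat \<Rightarrow> bool" where
  "trace_class a \<longleftrightarrow> bdd_above (tn_set a)"

definition trace_norm :: "'i mat \<Rightarrow> real" where
  "trace_norm a = Sup (tn_set a)"

definition selfadj :: "'i mat \<Rightarrow> bool" where
  "selfadj a \<longleftrightarrow> (\<forall>i j. a j i = cnj (a i j))"

definition density :: "'i mat \<Rightarrow> bool" where
  "density a \<longleftrightarrow> trace_class a \<and>
     (\<forall>F x. finite F \<longrightarrow>
        Im (\<Sum>i\<in>F. \<Sum>j\<in>F. cnj (x i) * a i j * x j) = 0 \<and>
        0 \<le> Re (\<Sum>i\<in>F. \<Sum>j\<in>F. cnj (x i) * a i j * x j)) \<and>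
     ((\<lambda>i. a i i) has_sum 1) UNIV"

definition tensor :: "'a mat \<Rightarrow> 'b mat \<Rightarrow> ('a \<times> 'b) mat" where
  "tensor X Y = (\<lambda>(i, k) (i', k'). X i i' * Y k k')"

definition std_decomp :: "('a \<times> 'b) mat \<Rightarrow> (nat \<Rightarrow> real) \<Rightarrow> (nat \<Rightarrow> 'a mat) \<Rightarrow> (nat \<Rightarrow> 'b mat) \<Rightarrow> bool" where
  "std_decomp C r X Y \<longleftrightarrow>
     (\<forall>k. 0 \<le> r k) \<and> summable r \<and>
     (\<forall>k. trace_class (X k) \<and> trace_class (Y k) \<and> trace_norm (X k) * trace_norm (Y k) = 1) \<and>
     (\<lambda>n. trace_norm (\<lambda>p q. C p q - (\<Sum>k<n. complex_of_real (r k) * tensor (X k) (Y k) p q)))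
        \<longlonglongrightarrow> 0"

definition cross_trace_class :: "('a \<times> 'b) mat \<Rightarrow> bool" where
  "cross_trace_class C \<longleftrightarrow> trace_class C \<and> (\<exists>r X Y. std_decomp C r X Y)"

definition proj_norm :: "('a \<times> 'b) mat \<Rightarrow> ereal" where
  "proj_norm C = Inf {ereal (suminf r) | r X Y. std_decomp C r X Y}"

definition proj_norm_sa :: "('a \<times> 'b) mat \<Rightarrow> ereal" where
  "proj_norm_sa C = Inf {ereal (suminf r) | r X Y. std_decomp C r X Y \<and>
                          (\<forall>k. selfadj (X k) \<and> selfadj (Y k))}"

definition cross_states :: "('a \<times> 'b) mat set" where
  "cross_states = {D. density D \<and> cross_trace_class D}"

end

theory Submission
  imports Defs
begin


definition nsq :: "'i set \<Rightarrow> ('i \<Rightarrow> complex) \<Rightarrow> real" where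
  "nsq F x = (\<Sum>i\<in>F. (cmod (x i))^2)"

definition trm :: "'i set \<Rightarrow> 'i mat \<Rightarrow> 'i mat \<Rightarrow> complex" where
  "trm F a b = (\<Sum>i\<in>F. \<Sum>j\<in>F. a i j * b j i)"

lemma nsq_nonneg: "0 \<le> nsq F x"
  unfolding nsq_def by (simp add: sum_nonneg)

lemma contraction_zero: "contraction_on F (\<lambda>i j. 0)"
  unfolding contraction_on_def by (simp add: sum_nonneg)

lemma tn_set_ne: "0 \<in> tn_set a"
  unfolding tn_set_def
  apply (rule CollectI)
  apply (rule exI[of _ "{}"])
  apply (rule exI[of _ "\<lambda>i j. 0"])
  by (simp add: contraction_zero)

lemma tn_le:
  assumes "finite F" "contraction_on F b" "trace_class a"
  shows "cmod (trm F a b) \<le> trace_norm a"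
proof -
  have "cmod (trm F a b) \<in> tn_set a" unfolding tn_set_def trm_def using assms(1,2) by blast
  then show ?thesis using assms(3) unfolding trace_class_def trace_norm_def
    by (simp add: cSup_upper)
qed

lemma tn_nonneg: "trace_class a \<Longrightarrow> 0 \<le> trace_norm a"
  unfolding trace_class_def trace_norm_def using tn_set_ne
  by (meson cSup_upper)

lemma tn_bound:
  assumes "\<And>F b. finite F \<Longrightarrow> contraction_on F b \<Longrightarrow> cmod (trm F a b) \<le> B"
  shows "trace_class a" "trace_norm a \<le> B"
proof -
  have "\<forall>y\<in>tn_set a. y \<le> B" unfolding tn_set_def trm_def using assms unfolding trm_def by auto
  then show "trace_class a" unfolding trace_class_def by (meson bdd_above.I)
  show "trace_norm a \<le> B" unfolding trace_norm_def using tn_set_ne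
    by (metis \<open>\<forall>y\<in>tn_set a. y \<le> B\<close> cSup_least empty_iff)
qed

lemma cs_complex:
  assumes "finite A"
  shows "(cmod (\<Sum>i\<in>A. a i * b i))^2 \<le> nsq A a * nsq A b"
proof -
  have "cmod (\<Sum>i\<in>A. a i * b i) \<le> (\<Sum>i\<in>A. cmod (a i) * cmod (b i))"
    by (metis (no_types, lifting) norm_mult norm_sum sum.cong)
  hence "(cmod (\<Sum>i\<in>A. a i * b i))^2 \<le> (\<Sum>i\<in>A. cmod (a i) * cmod (b i))^2"
    by (simp add: power_mono)
  also have "\<dots> \<le> nsq A a * nsq A b" unfolding nsq_def by (rule Cauchy_Schwarz_ineq_sum)
  finally show ?thesis .
qed

lemma contraction_entry:
  assumes "contraction_on F b" and fin: "finite F"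
  shows "cmod (b i j) \<le> 1"
proof (cases "i \<in> F \<and> j \<in> F")
  case False then show ?thesis using assms unfolding contraction_on_def by auto
next
  case True
  define x where "x = (\<lambda>l. if l = j then (1::complex) else 0)"
  have "(\<Sum>i\<in>F. (cmod (\<Sum>l\<in>F. b i l * x l))^2) \<le> (\<Sum>l\<in>F. (cmod (x l))^2)"
    using assms unfolding contraction_on_def by blast
  moreover have "(\<Sum>l\<in>F. (cmod (x l))^2) = (\<Sum>l\<in>F. if l = j then 1 else 0)"
    unfolding x_def by (rule sum.cong) auto
  moreover have "(\<Sum>l\<in>F. if l = j then 1 else (0::real)) = 1" using True fin by simp
  moreover have "\<And>i. (\<Sum>l\<in>F. b i l * x l) = b i j" using True fin unfolding x_def
    by (simp add: if_distrib sum.delta cong: if_cong)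
  ultimately have "(\<Sum>i\<in>F. (cmod (b i j))^2) \<le> 1" by simp
  moreover have "(cmod (b i j))^2 \<le> (\<Sum>i\<in>F. (cmod (b i j))^2)"
    using True fin by (intro member_le_sum) auto
  ultimately have "(cmod (b i j))^2 \<le> 1" by linarith
  thus ?thesis by (simp add: power_le_one_iff abs_le_square_iff)
qed



lemma trm_add: "trm F (\<lambda>p q. a p q + b p q) c = trm F a c + trm F b c"
  unfolding trm_def by (simp add: distrib_right sum.distrib)
lemma trm_diff: "trm F (\<lambda>p q. a p q - b p q) c = trm F a c - trm F b c"
  unfolding trm_def by (simp add: left_diff_distrib sum_subtractf)
lemma trm_scale: "trm F (\<lambda>p q. k * a p q) c = k * trm F a c"
  unfolding trm_def by (simp add: sum_distrib_left mult.assoc)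
lemma trm_scale2: "trm F a (\<lambda>p q. k * c p q) = k * trm F a c"
  unfolding trm_def by (simp add: sum_distrib_left mult.assoc mult.left_commute)
lemma trm_zero: "trm F (\<lambda>p q. 0) c = 0"
  unfolding trm_def by simp
lemma trm_sum: "trm F (\<lambda>p q. \<Sum>k<(N::nat). t k p q) c = (\<Sum>k<N. trm F (t k) c)"
  by (induction N) (simp_all add: trm_zero trm_add)

lemma tc_add:
  fixes a b :: "'i mat"
  assumes "trace_class a" "trace_class b"
  shows "trace_class (\<lambda>p q. a p q + b p q)"
proof (rule tn_bound(1))
  fix F :: "'i set" and c :: "'i mat" assume "finite F" "contraction_on F c"
  then have "cmod (trm F a c) \<le> trace_norm a" "cmod (trm F b c) \<le> trace_norm b"
    using tn_le assms by blast+
  then show "cmod (trm F (\<lambda>p q. a p q + b p q) c) \<le> trace_norm a + trace_norm b"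
    unfolding trm_add by (meson add_mono norm_triangle_ineq order_trans)
qed

lemma tc_scale:
  fixes a :: "'i mat"
  assumes "trace_class a"
  shows "trace_class (\<lambda>p q. k * a p q)"
proof (rule tn_bound(1))
  fix F :: "'i set" and c :: "'i mat" assume "finite F" "contraction_on F c"
  then have "cmod (trm F a c) \<le> trace_norm a"
    using tn_le assms by blast+
  then show "cmod (trm F (\<lambda>p q. k * a p q) c) \<le> cmod k * trace_norm a"
    unfolding trm_scale by (simp add: mult_left_mono norm_mult)
qed

lemma tc_diff:
  assumes "trace_class a" "trace_class b"
  shows "trace_class (\<lambda>p q. a p q - b p q)"
proof -
  have "trace_class (\<lambda>p q. a p q + (-1) * b p q)"
    by (rule tc_add[OF assms(1) tc_scale[OF assms(2)]])
  then show ?thesis by simp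
qed

lemma tc_zero: "trace_class (\<lambda>p q. 0)"
  by (rule tn_bound(1)[where B=0]) (simp add: trm_zero)

lemma tc_sum:
  fixes t :: "nat \<Rightarrow> 'i mat" and N :: nat
  assumes "\<And>k. trace_class (t k)"
  shows "trace_class (\<lambda>p q. \<Sum>k<N. c k * t k p q)"
proof (induction N)
  case 0 then show ?case by (simp add: tc_zero)
next
  case (Suc N)
  have "trace_class (\<lambda>p q. (\<Sum>k<N. c k * t k p q) + c N * t N p q)"
    by (rule tc_add[OF Suc tc_scale[OF assms]])
  then show ?case by simp
qed

lemma fin_supp_tc:
  assumes fG: "finite G" and supp: "\<And>p q. p \<notin> G \<or> q \<notin> G \<Longrightarrow> a p q = 0"
  shows "trace_class a" "trace_norm a \<le> (\<Sum>p\<in>G. \<Sum>q\<in>G. cmod (a p q))"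
proof -
  have "cmod (trm F a b) \<le> (\<Sum>p\<in>G. \<Sum>q\<in>G. cmod (a p q))" if fF: "finite F" and cb: "contraction_on F b" for F b
  proof -
    have "cmod (trm F a b) \<le> (\<Sum>p\<in>F. \<Sum>q\<in>F. cmod (a p q * b q p))"
      unfolding trm_def by (rule order_trans[OF norm_sum], rule sum_mono, rule norm_sum)
    also have "\<dots> \<le> (\<Sum>p\<in>F. \<Sum>q\<in>F. cmod (a p q))"
    proof (rule sum_mono, rule sum_mono)
      fix p q
      have "cmod (b q p) \<le> 1" by (rule contraction_entry[OF cb fF])
      then show "cmod (a p q * b q p) \<le> cmod (a p q)"
        by (simp add: norm_mult mult_left_le)
    qed
    also have "\<dots> \<le> (\<Sum>p\<in>F \<union> G. \<Sum>q\<in>F \<union> G. cmod (a p q))"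
    proof -
      have "(\<Sum>p\<in>F. \<Sum>q\<in>F. cmod (a p q)) \<le> (\<Sum>p\<in>F. \<Sum>q\<in>F \<union> G. cmod (a p q))"
        by (rule sum_mono, rule sum_mono2) (use fF fG in auto)
      also have "\<dots> \<le> (\<Sum>p\<in>F \<union> G. \<Sum>q\<in>F \<union> G. cmod (a p q))"
        by (rule sum_mono2) (use fF fG in \<open>auto intro: sum_nonneg\<close>)
      finally show ?thesis .
    qed
    also have "\<dots> = (\<Sum>p\<in>G. \<Sum>q\<in>G. cmod (a p q))"
    proof -
      have "(\<Sum>p\<in>F \<union> G. \<Sum>q\<in>F \<union> G. cmod (a p q)) = (\<Sum>p\<in>G. \<Sum>q\<in>F \<union> G. cmod (a p q))"
        by (rule sum.mono_neutral_left[symmetric]) (use fF fG supp in auto)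
      also have "\<dots> = (\<Sum>p\<in>G. \<Sum>q\<in>G. cmod (a p q))"
        by (rule sum.cong[OF refl], rule sum.mono_neutral_left[symmetric]) (use fF fG supp in auto)
      finally show ?thesis .
    qed
    finally show ?thesis .
  qed
  then show "trace_class a" "trace_norm a \<le> (\<Sum>p\<in>G. \<Sum>q\<in>G. cmod (a p q))"
    using tn_bound by blast+
qed

lemma scaled_le:
  assumes fF: "finite F" and supp: "\<And>i j. i \<notin> F \<or> j \<notin> F \<Longrightarrow> c i j = 0"
    and M: "M > 0"
    and op: "\<And>x. (\<Sum>i\<in>F. (cmod (\<Sum>j\<in>F. c i j * x j))^2) \<le> M^2 * (\<Sum>j\<in>F. (cmod (x j))^2)"
    and tc: "trace_class a"
  shows "cmod (trm F a c) \<le> M * trace_norm a"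
proof -
  define b where "b = (\<lambda>i j. c i j / complex_of_real M)"
  have cb: "contraction_on F b"
    unfolding contraction_on_def
  proof (intro conjI allI impI)
    fix i j assume "i \<notin> F \<or> j \<notin> F" then show "b i j = 0" unfolding b_def using supp by simp
  next
    fix x
    have "(\<Sum>i\<in>F. (cmod (\<Sum>j\<in>F. b i j * x j))^2) = (\<Sum>i\<in>F. (cmod (\<Sum>j\<in>F. c i j * x j))^2) / M^2"
      unfolding b_def
      by (simp add: sum_divide_distrib[symmetric] norm_divide power_divide times_divide_eq_left
            del: of_real_power)
    also have "\<dots> \<le> (\<Sum>j\<in>F. (cmod (x j))^2)"
      using op[of x] M by (simp add: divide_le_eq mult.commute)
    finally show "(\<Sum>i\<in>F. (cmod (\<Sum>j\<in>F. b i j * x j))^2) \<le> (\<Sum>j\<in>F. (cmod (x j))^2)" .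
  qed
  have "c = (\<lambda>i j. complex_of_real M * b i j)" unfolding b_def using M by (auto simp: fun_eq_iff)
  then have "trm F a c = complex_of_real M * trm F a b" using trm_scale2 by metis
  then show ?thesis using tn_le[OF fF cb tc] M by (simp add: norm_mult)
qed

lemma op_from_bil:
  assumes fG: "finite G" and M: "M \<ge> 0"
    and bil: "\<And>u v. nsq G u \<le> 1 \<Longrightarrow> nsq G v \<le> 1 \<Longrightarrow>
               cmod (\<Sum>i\<in>G. \<Sum>j\<in>G. cnj (u i) * c i j * v j) \<le> M"
  shows "(\<Sum>i\<in>G. (cmod (\<Sum>j\<in>G. c i j * x j))^2) \<le> M^2 * (\<Sum>j\<in>G. (cmod (x j))^2)"
proof -
  define y where "y = (\<lambda>i. \<Sum>j\<in>G. c i j * x j)"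
  define A where "A = sqrt (nsq G y)"
  define B where "B = sqrt (nsq G x)"
  have A2: "A^2 = nsq G y" unfolding A_def by (simp add: nsq_nonneg)
  have B2: "B^2 = nsq G x" unfolding B_def by (simp add: nsq_nonneg)
  have A0: "A \<ge> 0" "B \<ge> 0" unfolding A_def B_def by (auto simp: nsq_nonneg)
  have key: "(\<Sum>i\<in>G. \<Sum>j\<in>G. cnj (y i) * c i j * x j) = complex_of_real (nsq G y)"
  proof -
    have "(\<Sum>i\<in>G. \<Sum>j\<in>G. cnj (y i) * c i j * x j) = (\<Sum>i\<in>G. cnj (y i) * y i)"
      unfolding y_def by (simp add: sum_distrib_left mult.assoc)
    also have "\<dots> = (\<Sum>i\<in>G. complex_of_real ((cmod (y i))^2))"
      by (rule sum.cong[OF refl]) (metis complex_norm_square mult.commute)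
    finally show ?thesis unfolding nsq_def by simp
  qed
  have goal: "nsq G y \<le> M^2 * nsq G x \<Longrightarrow> ?thesis" unfolding nsq_def y_def by simp
  show ?thesis
  proof (cases "A = 0")
    case True
    then have "nsq G y = 0" using A2 by simp
    then show ?thesis using M nsq_nonneg[of G x] by (intro goal) simp
  next
    case False
    then have Apos: "A > 0" using A0 by simp
    show ?thesis
    proof (cases "B = 0")
      case True
      then have "nsq G x = 0" using B2 by simp
      then have "\<forall>j\<in>G. x j = 0" unfolding nsq_def using fG
        by (simp add: sum_nonneg_eq_0_iff)
      then have "\<forall>i. y i = 0" unfolding y_def by simp
      then have "nsq G y = 0" unfolding nsq_def by simp
      then show ?thesis using A2 False by simp
    next
      case False
      then have Bpos: "B > 0" using A0 by simp
      define u where "u = (\<lambda>i. y i / complex_of_real A)"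
      define v where "v = (\<lambda>i. x i / complex_of_real B)"
      have "nsq G u = nsq G y / A^2" unfolding nsq_def u_def
        by (simp add: norm_divide power_divide sum_divide_distrib)
      then have nu: "nsq G u = 1" using A2 Apos by (metis divide_self less_numeral_extra(3) zero_less_power)
      have "nsq G v = nsq G x / B^2" unfolding nsq_def v_def
        by (simp add: norm_divide power_divide sum_divide_distrib)
      then have nv: "nsq G v = 1" using B2 Bpos by (metis divide_self less_numeral_extra(3) zero_less_power)
      have "(\<Sum>i\<in>G. \<Sum>j\<in>G. cnj (u i) * c i j * v j)
          = (\<Sum>i\<in>G. \<Sum>j\<in>G. cnj (y i) * c i j * x j) / complex_of_real (A * B)"
        unfolding u_def v_def by (simp add: sum_divide_distrib)
      also have "\<dots> = complex_of_real (A^2 / (A * B))" using key A2 by simp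
      also have "\<dots> = complex_of_real (A / B)" using Apos by (simp add: power2_eq_square)
      finally have eq: "(\<Sum>i\<in>G. \<Sum>j\<in>G. cnj (u i) * c i j * v j) = complex_of_real (A / B)" .
      have "cmod (\<Sum>i\<in>G. \<Sum>j\<in>G. cnj (u i) * c i j * v j) \<le> M" using bil nu nv by simp
      then have "A / B \<le> M" using Apos Bpos eq by (simp add: norm_divide)
      then have "A \<le> M * B" using Bpos by (simp add: divide_le_eq)
      then have "A^2 \<le> (M * B)^2" using Apos by (simp add: power_mono)
      then show ?thesis using A2 B2 by (intro goal) (simp add: power_mult_distrib)
    qed
  qed
qed

lemma contraction_mono:
  assumes "contraction_on F b" "F \<subseteq> G" "finite G"
  shows "contraction_on G b"
  unfolding contraction_on_def
proof (intro conjI allI impI)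
  fix i j assume "i \<notin> G \<or> j \<notin> G" then show "b i j = 0" using assms unfolding contraction_on_def by auto
next
  fix x
  have fF: "finite F" using assms finite_subset by blast
  have z: "\<And>i j. i \<notin> F \<or> j \<notin> F \<Longrightarrow> b i j = 0" using assms(1) unfolding contraction_on_def by auto
  have "(\<Sum>i\<in>G. (cmod (\<Sum>j\<in>G. b i j * x j))^2) = (\<Sum>i\<in>G. (cmod (\<Sum>j\<in>F. b i j * x j))^2)"
    by (rule sum.cong[OF refl], subst sum.mono_neutral_left[of G F]) (use assms z in auto)
  also have "\<dots> = (\<Sum>i\<in>F. (cmod (\<Sum>j\<in>F. b i j * x j))^2)"
    by (rule sum.mono_neutral_right) (use assms z in auto)
  also have "\<dots> \<le> (\<Sum>j\<in>F. (cmod (x j))^2)" using assms(1) unfolding contraction_on_def by blast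
  also have "\<dots> \<le> (\<Sum>j\<in>G. (cmod (x j))^2)" by (rule sum_mono2) (use assms in auto)
  finally show "(\<Sum>i\<in>G. (cmod (\<Sum>j\<in>G. b i j * x j))^2) \<le> (\<Sum>j\<in>G. (cmod (x j))^2)" .
qed



lemma sum_prod: "(\<Sum>p\<in>A\<times>B. f p) = (\<Sum>i\<in>A. \<Sum>k\<in>B. f (i,k))"
  by (simp add: sum.cartesian_product)

lemma tensor_bound:
  fixes X :: "'a mat" and Y :: "'b mat" and W :: "('a \<times> 'b) mat"
  assumes f1: "finite F1" and f2: "finite F2"
    and suppW: "\<And>p q. p \<notin> F1 \<times> F2 \<or> q \<notin> F1 \<times> F2 \<Longrightarrow> W p q = 0"
    and dcon: "\<And>u v. nsq F1 u \<le> 1 \<Longrightarrow> nsq F1 v \<le> 1 \<Longrightarrow>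
       contraction_on F2 (\<lambda>k' k. \<Sum>i'\<in>F1. \<Sum>i\<in>F1. cnj (u i') * W (i',k') (i,k) * v i)"
    and tX: "trace_class X" and tY: "trace_class Y" and M: "M > 0" "trace_norm Y \<le> M"
  shows "cmod (trm (F1 \<times> F2) (tensor X Y) W) \<le> M * trace_norm X"
proof -
  define c where "c = (\<lambda>i' i. \<Sum>k\<in>F2. \<Sum>k'\<in>F2. Y k k' * W (i',k') (i,k))"
  have E1: "trm (F1 \<times> F2) (tensor X Y) W = trm F1 X c"
  proof -
    have "trm (F1 \<times> F2) (tensor X Y) W
        = (\<Sum>i\<in>F1. \<Sum>k\<in>F2. \<Sum>i'\<in>F1. \<Sum>k'\<in>F2. X i i' * Y k k' * W (i',k') (i,k))"
      unfolding trm_def tensor_def sum_prod by simp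
    also have "\<dots> = (\<Sum>i\<in>F1. \<Sum>i'\<in>F1. \<Sum>k\<in>F2. \<Sum>k'\<in>F2. X i i' * Y k k' * W (i',k') (i,k))"
      by (rule sum.cong[OF refl], rule sum.swap)
    also have "\<dots> = trm F1 X c"
      unfolding trm_def c_def by (simp add: sum_distrib_left mult.assoc)
    finally show ?thesis .
  qed
  have E2: "(\<Sum>i'\<in>F1. \<Sum>i\<in>F1. cnj (u i') * c i' i * v i)
      = trm F2 Y (\<lambda>k' k. \<Sum>i'\<in>F1. \<Sum>i\<in>F1. cnj (u i') * W (i',k') (i,k) * v i)" for u v
  proof -
    have "(\<Sum>i'\<in>F1. \<Sum>i\<in>F1. cnj (u i') * c i' i * v i)
       = (\<Sum>i'\<in>F1. \<Sum>i\<in>F1. \<Sum>k\<in>F2. \<Sum>k'\<in>F2. Y k k' * (cnj (u i') * W (i',k') (i,k) * v i))"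
      unfolding c_def by (simp add: sum_distrib_left sum_distrib_right mult_ac)
    also have "\<dots> = (\<Sum>i'\<in>F1. \<Sum>k\<in>F2. \<Sum>i\<in>F1. \<Sum>k'\<in>F2. Y k k' * (cnj (u i') * W (i',k') (i,k) * v i))"
      by (rule sum.cong[OF refl], rule sum.swap)
    also have "\<dots> = (\<Sum>k\<in>F2. \<Sum>i'\<in>F1. \<Sum>i\<in>F1. \<Sum>k'\<in>F2. Y k k' * (cnj (u i') * W (i',k') (i,k) * v i))"
      by (rule sum.swap)
    also have "\<dots> = (\<Sum>k\<in>F2. \<Sum>i'\<in>F1. \<Sum>k'\<in>F2. \<Sum>i\<in>F1. Y k k' * (cnj (u i') * W (i',k') (i,k) * v i))"
      by (rule sum.cong[OF refl], rule sum.cong[OF refl], rule sum.swap)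
    also have "\<dots> = (\<Sum>k\<in>F2. \<Sum>k'\<in>F2. \<Sum>i'\<in>F1. \<Sum>i\<in>F1. Y k k' * (cnj (u i') * W (i',k') (i,k) * v i))"
      by (rule sum.cong[OF refl], rule sum.swap)
    also have "\<dots> = trm F2 Y (\<lambda>k' k. \<Sum>i'\<in>F1. \<Sum>i\<in>F1. cnj (u i') * W (i',k') (i,k) * v i)"
      unfolding trm_def by (simp add: sum_distrib_left)
    finally show ?thesis .
  qed
  have bil: "cmod (\<Sum>i'\<in>F1. \<Sum>i\<in>F1. cnj (u i') * c i' i * v i) \<le> M"
    if "nsq F1 u \<le> 1" "nsq F1 v \<le> 1" for u v
    unfolding E2 using tn_le[OF f2 dcon[OF that] tY] M(2) by linarith
  have op: "(\<Sum>i\<in>F1. (cmod (\<Sum>j\<in>F1. c i j * x j))^2) \<le> M^2 * (\<Sum>j\<in>F1. (cmod (x j))^2)" for x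
    by (rule op_from_bil[OF f1]) (use M bil in auto)
  have suppc: "c i j = 0" if "i \<notin> F1 \<or> j \<notin> F1" for i j
    unfolding c_def using suppW that by auto
  show ?thesis unfolding E1 by (rule scaled_le[OF f1 suppc M(1) op tX]) auto
qed



lemma dcon_general:
  fixes b :: "('a \<times> 'b) mat"
  assumes f1: "finite F1" and f2: "finite F2" and cb: "contraction_on (F1 \<times> F2) b"
    and nu: "nsq F1 u \<le> 1" and nv: "nsq F1 v \<le> 1"
  shows "contraction_on F2 (\<lambda>k' k. \<Sum>i'\<in>F1. \<Sum>i\<in>F1. cnj (u i') * b (i',k') (i,k) * v i)"
  unfolding contraction_on_def
proof (intro conjI allI impI)
  fix k' k :: 'b assume "k' \<notin> F2 \<or> k \<notin> F2"
  then have "\<And>i' i. b (i',k') (i,k) = 0" using cb unfolding contraction_on_def by auto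
  then show "(\<Sum>i'\<in>F1. \<Sum>i\<in>F1. cnj (u i') * b (i',k') (i,k) * v i) = 0" by simp
next
  fix x :: "'b \<Rightarrow> complex"
  define G where "G = F1 \<times> F2"
  have fG: "finite G" unfolding G_def using f1 f2 by simp
  define z where "z = (\<lambda>(i,k). v i * x k)"
  define w where "w = (\<lambda>p. \<Sum>q\<in>G. b p q * z q)"
  have rew: "(\<Sum>k\<in>F2. (\<Sum>i'\<in>F1. \<Sum>i\<in>F1. cnj (u i') * b (i',k') (i,k) * v i) * x k)
        = (\<Sum>i'\<in>F1. cnj (u i') * w (i',k'))" for k'
  proof -
    have "(\<Sum>k\<in>F2. (\<Sum>i'\<in>F1. \<Sum>i\<in>F1. cnj (u i') * b (i',k') (i,k) * v i) * x k)
        = (\<Sum>k\<in>F2. \<Sum>i'\<in>F1. \<Sum>i\<in>F1. cnj (u i') * (b (i',k') (i,k) * (v i * x k)))"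
      by (simp add: sum_distrib_right sum_distrib_left mult_ac)
    also have "\<dots> = (\<Sum>i'\<in>F1. \<Sum>k\<in>F2. \<Sum>i\<in>F1. cnj (u i') * (b (i',k') (i,k) * (v i * x k)))"
      by (rule sum.swap)
    also have "\<dots> = (\<Sum>i'\<in>F1. \<Sum>i\<in>F1. \<Sum>k\<in>F2. cnj (u i') * (b (i',k') (i,k) * (v i * x k)))"
      by (rule sum.cong[OF refl], rule sum.swap)
    also have "\<dots> = (\<Sum>i'\<in>F1. cnj (u i') * w (i',k'))"
      unfolding w_def G_def z_def sum_prod by (simp add: sum_distrib_left)
    finally show ?thesis .
  qed
  have step1: "(cmod (\<Sum>i'\<in>F1. cnj (u i') * w (i',k')))^2 \<le> (\<Sum>i'\<in>F1. (cmod (w (i',k')))^2)" for k'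
  proof -
    have "(cmod (\<Sum>i'\<in>F1. cnj (u i') * w (i',k')))^2 \<le> nsq F1 (\<lambda>i'. cnj (u i')) * nsq F1 (\<lambda>i'. w (i',k'))"
      by (rule cs_complex[OF f1])
    also have "\<dots> \<le> nsq F1 (\<lambda>i'. w (i',k'))"
    proof -
      have "nsq F1 (\<lambda>i'. cnj (u i')) = nsq F1 u" unfolding nsq_def by simp
      then show ?thesis using nu nsq_nonneg[of F1 "\<lambda>i'. w (i',k')"] nsq_nonneg[of F1 u] by (simp add: mult_left_le_one_le)
    qed
    finally show ?thesis unfolding nsq_def .
  qed
  have "(\<Sum>k'\<in>F2. (cmod (\<Sum>k\<in>F2. (\<Sum>i'\<in>F1. \<Sum>i\<in>F1. cnj (u i') * b (i',k') (i,k) * v i) * x k))^2)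
      \<le> (\<Sum>k'\<in>F2. \<Sum>i'\<in>F1. (cmod (w (i',k')))^2)"
    unfolding rew by (rule sum_mono) (rule step1)
  also have "\<dots> = (\<Sum>p\<in>G. (cmod (w p))^2)"
    unfolding G_def sum_prod by (rule sum.swap)
  also have "\<dots> \<le> (\<Sum>q\<in>G. (cmod (z q))^2)"
    using cb unfolding contraction_on_def w_def G_def by blast
  also have "\<dots> = nsq F1 v * nsq F2 x"
    unfolding G_def sum_prod z_def nsq_def
    by (simp add: norm_mult power_mult_distrib sum_product)
  also have "\<dots> \<le> nsq F2 x"
    using nv nsq_nonneg[of F2 x] nsq_nonneg[of F1 v] by (simp add: mult_left_le_one_le)
  finally show "(\<Sum>k'\<in>F2. (cmod (\<Sum>k\<in>F2. (\<Sum>i'\<in>F1. \<Sum>i\<in>F1. cnj (u i') * b (i',k') (i,k) * v i) * x k))^2)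
      \<le> (\<Sum>k\<in>F2. (cmod (x k))^2)" unfolding nsq_def .
qed

lemma tensor_tc:
  fixes X :: "'a mat" and Y :: "'b mat"
  assumes tX: "trace_class X" and tY: "trace_class Y"
  shows "trace_class (tensor X Y)"
proof (rule tn_bound(1))
  fix F :: "('a \<times> 'b) set" and b assume fF: "finite F" and cb: "contraction_on F b"
  define F1 where "F1 = fst ` F"
  define F2 where "F2 = snd ` F"
  have f1: "finite F1" and f2: "finite F2" unfolding F1_def F2_def using fF by auto
  have sub: "F \<subseteq> F1 \<times> F2" unfolding F1_def F2_def by force
  have cbG: "contraction_on (F1 \<times> F2) b" by (rule contraction_mono[OF cb sub]) (use f1 f2 in simp)
  have bz: "b p q = 0" if "p \<notin> F \<or> q \<notin> F" for p q using cb that unfolding contraction_on_def by blast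
  have "trm F (tensor X Y) b = trm (F1 \<times> F2) (tensor X Y) b"
  proof -
    have "trm F (tensor X Y) b = (\<Sum>i\<in>F. \<Sum>j\<in>F1 \<times> F2. tensor X Y i j * b j i)"
      unfolding trm_def by (rule sum.cong[OF refl], rule sum.mono_neutral_left) (use f1 f2 sub bz in auto)
    also have "\<dots> = trm (F1 \<times> F2) (tensor X Y) b"
      unfolding trm_def by (rule sum.mono_neutral_left) (use f1 f2 sub bz in \<open>auto intro!: sum.neutral\<close>)
    finally show ?thesis .
  qed
  also have "cmod \<dots> \<le> (trace_norm Y + 1) * trace_norm X"
  proof (rule tensor_bound[OF f1 f2 _ _ tX tY])
    show "\<And>p q. p \<notin> F1 \<times> F2 \<or> q \<notin> F1 \<times> F2 \<Longrightarrow> b p q = 0"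
      using cbG unfolding contraction_on_def by blast
    show "\<And>u v. nsq F1 u \<le> 1 \<Longrightarrow> nsq F1 v \<le> 1 \<Longrightarrow>
       contraction_on F2 (\<lambda>k' k. \<Sum>i'\<in>F1. \<Sum>i\<in>F1. cnj (u i') * b (i',k') (i,k) * v i)"
      by (rule dcon_general[OF f1 f2 cbG])
    show "0 < trace_norm Y + 1" "trace_norm Y \<le> trace_norm Y + 1" using tn_nonneg[OF tY] by auto
  qed
  finally show "cmod (trm F (tensor X Y) b) \<le> (trace_norm Y + 1) * trace_norm X" .
qed



definition munit :: "'i \<Rightarrow> 'i \<Rightarrow> 'i mat" where
  "munit i j = (\<lambda>a c. if a = i \<and> c = j then 1 else 0)"

lemma tn_zero: "trace_norm (\<lambda>(p::'i) (q::'i). 0) = 0"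
proof -
  have "trace_norm (\<lambda>(p::'i) (q::'i). 0) \<le> 0"
    by (rule tn_bound(2)) (simp add: trm_zero)
  then show ?thesis using tn_nonneg[OF tc_zero] by (metis antisym)
qed

lemma munit_tc: "trace_class (munit i j)"
  by (rule fin_supp_tc(1)[of "{i,j}"]) (auto simp: munit_def)

lemma trm_munit: "finite F \<Longrightarrow> trm F (munit i j) b = (if i \<in> F \<and> j \<in> F then b j i else 0)"
proof -
  assume fF: "finite F"
  have "\<And>ia. (\<Sum>ja\<in>F. munit i j ia ja * b ja ia) = (if ia = i \<and> j \<in> F then b j i else 0)"
  proof -
    fix ia
    show "(\<Sum>ja\<in>F. munit i j ia ja * b ja ia) = (if ia = i \<and> j \<in> F then b j i else 0)"
    proof (cases "ia = i")
      case True
      then have "(\<Sum>ja\<in>F. munit i j ia ja * b ja ia) = (\<Sum>ja\<in>F. if ja = j then b j i else 0)"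
        unfolding munit_def by (intro sum.cong) auto
      then show ?thesis using fF True by simp
    next
      case False then show ?thesis unfolding munit_def by simp
    qed
  qed
  then have "trm F (munit i j) b = (\<Sum>ia\<in>F. if ia = i then (if j \<in> F then b j i else 0) else 0)"
    unfolding trm_def by (intro sum.cong) auto
  then show ?thesis using fF by simp
qed

lemma munit_tn: "trace_norm (munit i j) = 1"
proof (rule antisym)
  show "trace_norm (munit i j) \<le> 1"
  proof (rule tn_bound(2))
    fix F :: "'a set" and b assume "finite F" "contraction_on F b"
    then show "cmod (trm F (munit i j) b) \<le> 1" using contraction_entry[of F b j i]
      by (simp add: trm_munit)
  qed
  have c: "contraction_on {i,j} (munit j i)"
    unfolding contraction_on_def
  proof (intro conjI allI impI)
    fix a c assume "a \<notin> {i,j} \<or> c \<notin> {i,j}" then show "munit j i a c = 0" unfolding munit_def by auto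
  next
    fix x :: "'a \<Rightarrow> complex"
    have "(\<Sum>a\<in>{i,j}. (cmod (\<Sum>c\<in>{i,j}. munit j i a c * x c))^2) = (\<Sum>a\<in>{i,j}. if a = j then (cmod (x i))^2 else 0)"
      unfolding munit_def by (rule sum.cong[OF refl]) (auto simp: if_distrib[of "\<lambda>x. x * _"] sum.delta cong: if_cong)
    also have "\<dots> = (cmod (x i))^2" by simp
    also have "\<dots> \<le> (\<Sum>c\<in>{i,j}. (cmod (x c))^2)" by (rule member_le_sum) auto
    finally show "(\<Sum>a\<in>{i,j}. (cmod (\<Sum>c\<in>{i,j}. munit j i a c * x c))^2) \<le> (\<Sum>c\<in>{i,j}. (cmod (x c))^2)" .
  qed
  have "cmod (trm {i,j} (munit i j) (munit j i)) \<le> trace_norm (munit i j)"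
    by (rule tn_le[OF _ c munit_tc]) simp
  moreover have "trm {i,j} (munit i j) (munit j i) = 1" by (subst trm_munit) (simp_all add: munit_def)
  ultimately show "1 \<le> trace_norm (munit i j)" by simp
qed

lemma tensor_munit: "tensor (munit i j) (munit k l) p q = (if p = (i,k) \<and> q = (j,l) then 1 else 0)"
  unfolding tensor_def munit_def by (cases p; cases q) auto



definition Sset :: "'a set \<Rightarrow> ('a \<Rightarrow> 'b) \<Rightarrow> ('a \<times> 'b) set" where
  "Sset F1 \<tau> = (\<lambda>i. (i, \<tau> i)) ` F1"

definition rho :: "'a set \<Rightarrow> ('a \<Rightarrow> 'b) \<Rightarrow> ('a \<times> 'b) mat" where
  "rho F1 \<tau> = (\<lambda>p q. if p \<in> Sset F1 \<tau> \<and> q \<in> Sset F1 \<tau> then 1 / of_nat (card F1) else 0)"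

definition Wm :: "'a set \<Rightarrow> ('a \<Rightarrow> 'b) \<Rightarrow> ('a \<times> 'b) mat" where
  "Wm F1 \<tau> = (\<lambda>p q. if p \<in> Sset F1 \<tau> \<and> q \<in> Sset F1 \<tau> then 1 else 0)"

context
  fixes F1 :: "'a set" and \<tau> :: "'a \<Rightarrow> 'b"
  assumes f1: "finite F1" and inj: "inj_on \<tau> F1" and ne: "F1 \<noteq> {}"
begin

abbreviation "zS \<equiv> Sset F1 \<tau>"
abbreviation "zF2 \<equiv> \<tau> ` F1"
abbreviation "zn \<equiv> card F1"
abbreviation "zG \<equiv> F1 \<times> \<tau> ` F1"

lemma n_pos: "zn > 0" using f1 ne by (simp add: card_gt_0_iff)

lemma fS: "finite zS" unfolding Sset_def using f1 by simp
lemma cardS: "card zS = zn" unfolding Sset_def by (rule card_image) (auto simp: inj_on_def)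
lemma S_sub: "zS \<subseteq> zG" unfolding Sset_def by auto
lemma fG: "finite zG" using f1 by simp
lemma memS: "p \<in> zS \<longleftrightarrow> fst p \<in> F1 \<and> snd p = \<tau> (fst p)" by (cases p) (auto simp: Sset_def image_iff)

lemma sum_S_ind: "(\<Sum>q\<in>zG. if q \<in> zS then c else 0) = of_nat zn * c"
proof -
  have "(\<Sum>q\<in>zG. if q \<in> zS then c else 0) = (\<Sum>q\<in>zS. c)"
    by (rule sum.mono_neutral_cong_right) (use fG fS S_sub in auto)
  then show ?thesis using cardS by simp
qed

lemma rho_contr: "contraction_on zG (rho F1 \<tau>)"
  unfolding contraction_on_def
proof (intro conjI allI impI)
  fix p q assume "p \<notin> zG \<or> q \<notin> zG" then show "rho F1 \<tau> p q = 0" unfolding rho_def using S_sub by auto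
next
  fix x :: "'a \<times> 'b \<Rightarrow> complex"
  define s where "s = (\<Sum>q\<in>zS. x q)"
  have inner: "(\<Sum>q\<in>zG. rho F1 \<tau> p q * x q) = (if p \<in> zS then s / of_nat zn else 0)" for p
  proof -
    have "(\<Sum>q\<in>zG. rho F1 \<tau> p q * x q) = (\<Sum>q\<in>zG. if q \<in> zS then (if p \<in> zS then x q / of_nat zn else 0) else 0)"
      unfolding rho_def by (rule sum.cong) auto
    also have "\<dots> = (\<Sum>q\<in>zS. (if p \<in> zS then x q / of_nat zn else 0))"
      by (rule sum.mono_neutral_cong_left[symmetric]) (use fG S_sub in auto)
    also have "\<dots> = (if p \<in> zS then s / of_nat zn else 0)"
      unfolding s_def by (simp add: sum_divide_distrib)
    finally show ?thesis .
  qed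
  have "(\<Sum>p\<in>zG. (cmod (\<Sum>q\<in>zG. rho F1 \<tau> p q * x q))^2) = (\<Sum>p\<in>zG. if p \<in> zS then (cmod (s / of_nat zn))^2 else 0)"
    unfolding inner by (rule sum.cong) auto
  also have "\<dots> = of_nat zn * (cmod s)^2 / (of_nat zn)^2"
    using sum_S_ind[of "(cmod (s / of_nat zn))^2"] by (simp add: norm_divide power_divide)
  also have "\<dots> = (cmod s)^2 / of_nat zn" using n_pos by (simp add: power2_eq_square)
  also have "\<dots> \<le> (of_nat zn * nsq zS x) / of_nat zn"
  proof -
    have "(cmod s)^2 \<le> nsq zS (\<lambda>_. 1) * nsq zS x" unfolding s_def using cs_complex[OF fS, of "\<lambda>_. 1" x] by simp
    also have "nsq zS (\<lambda>_. 1) = of_nat zn" unfolding nsq_def using cardS by simp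
    finally show ?thesis using n_pos by (intro divide_right_mono) simp_all
  qed
  also have "\<dots> = nsq zS x" using n_pos by simp
  also have "\<dots> \<le> (\<Sum>q\<in>zG. (cmod (x q))^2)" unfolding nsq_def by (rule sum_mono2) (use fG S_sub in auto)
  finally show "(\<Sum>p\<in>zG. (cmod (\<Sum>q\<in>zG. rho F1 \<tau> p q * x q))^2) \<le> (\<Sum>q\<in>zG. (cmod (x q))^2)" .
qed

lemma rho_tc: "trace_class (rho F1 \<tau>)"
  by (rule fin_supp_tc(1)[OF fS]) (auto simp: rho_def)

end


context
  fixes F1 :: "'a set" and \<tau> :: "'a \<Rightarrow> 'b"
  assumes f1: "finite F1" and inj: "inj_on \<tau> F1" and ne: "F1 \<noteq> {}"
begin

lemma rho_density: "density (rho F1 \<tau>)"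
  unfolding density_def
proof (intro conjI allI impI)
  show "trace_class (rho F1 \<tau>)" by (rule rho_tc[OF f1 inj ne])
next
  fix F :: "('a \<times> 'b) set" and x :: "'a \<times> 'b \<Rightarrow> complex" assume fF: "finite F"
  define s where "s = (\<Sum>j\<in>F. if j \<in> Sset F1 \<tau> then x j else 0)"
  have "(\<Sum>i\<in>F. \<Sum>j\<in>F. cnj (x i) * rho F1 \<tau> i j * x j)
      = (\<Sum>i\<in>F. (if i \<in> Sset F1 \<tau> then cnj (x i) else 0) * (s / of_nat (card F1)))"
    unfolding rho_def s_def
    by (rule sum.cong[OF refl]) (auto simp: sum_distrib_left sum_divide_distrib intro!: sum.cong)
  also have "\<dots> = cnj s * s / of_nat (card F1)"
  proof -
    have cs: "cnj s = (\<Sum>i\<in>F. if i \<in> Sset F1 \<tau> then cnj (x i) else 0)"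
      unfolding s_def cnj_sum by (rule sum.cong) auto
    show ?thesis unfolding cs by (simp add: sum_distrib_right sum_divide_distrib)
  qed
  also have "\<dots> = complex_of_real ((cmod s)^2 / real (card F1))"
  proof -
    have "cnj s * s = complex_of_real ((cmod s)^2)" by (metis complex_norm_square mult.commute)
    then show ?thesis by simp
  qed
  finally have eq: "(\<Sum>i\<in>F. \<Sum>j\<in>F. cnj (x i) * rho F1 \<tau> i j * x j) = complex_of_real ((cmod s)^2 / real (card F1))" .
  show "Im (\<Sum>i\<in>F. \<Sum>j\<in>F. cnj (x i) * rho F1 \<tau> i j * x j) = 0" unfolding eq by simp
  show "0 \<le> Re (\<Sum>i\<in>F. \<Sum>j\<in>F. cnj (x i) * rho F1 \<tau> i j * x j)" unfolding eq by simp
next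
  show "((\<lambda>i. rho F1 \<tau> i i) has_sum 1) UNIV"
  proof (rule has_sum_finite_neutralI[OF fS[OF f1 inj ne]])
    show "\<And>x. x \<in> UNIV - Sset F1 \<tau> \<Longrightarrow> rho F1 \<tau> x x = 0" unfolding rho_def by auto
    have "(\<Sum>x\<in>Sset F1 \<tau>. rho F1 \<tau> x x) = (\<Sum>x\<in>Sset F1 \<tau>. 1 / of_nat (card F1))"
      unfolding rho_def by (rule sum.cong) auto
    also have "\<dots> = 1" using cardS[OF f1 inj ne] n_pos[OF f1 inj ne] by simp
    finally show "1 = (\<Sum>x\<in>Sset F1 \<tau>. rho F1 \<tau> x x)" by simp
  qed simp
qed

end


context
  fixes F1 :: "'a set" and \<tau> :: "'a \<Rightarrow> 'b"
  assumes f1: "finite F1" and inj: "inj_on \<tau> F1" and ne: "F1 \<noteq> {}"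
begin

lemma Wm_val: "i' \<in> F1 \<Longrightarrow> i \<in> F1 \<Longrightarrow> j' \<in> F1 \<Longrightarrow> j \<in> F1 \<Longrightarrow>
   Wm F1 \<tau> (i', \<tau> j') (i, \<tau> j) = (if i' = j' \<and> i = j then 1 else 0)"
  unfolding Wm_def using inj by (auto simp: memS[OF f1 inj ne] inj_on_def)

lemma Wm_supp: "p \<notin> F1 \<times> \<tau> ` F1 \<or> q \<notin> F1 \<times> \<tau> ` F1 \<Longrightarrow> Wm F1 \<tau> p q = 0"
  unfolding Wm_def using S_sub[OF f1 inj ne] by auto

lemma Wm_dcon:
  assumes nu: "nsq F1 u \<le> 1" and nv: "nsq F1 v \<le> 1"
  shows "contraction_on (\<tau> ` F1) (\<lambda>k' k. \<Sum>i'\<in>F1. \<Sum>i\<in>F1. cnj (u i') * Wm F1 \<tau> (i',k') (i,k) * v i)"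
  unfolding contraction_on_def
proof (intro conjI allI impI)
  fix k' k assume "k' \<notin> \<tau> ` F1 \<or> k \<notin> \<tau> ` F1"
  then have "\<And>i' i. Wm F1 \<tau> (i',k') (i,k) = 0" using Wm_supp by auto
  then show "(\<Sum>i'\<in>F1. \<Sum>i\<in>F1. cnj (u i') * Wm F1 \<tau> (i',k') (i,k) * v i) = 0" by simp
next
  fix x :: "'b \<Rightarrow> complex"
  define d where "d = (\<lambda>k' k. \<Sum>i'\<in>F1. \<Sum>i\<in>F1. cnj (u i') * Wm F1 \<tau> (i',k') (i,k) * v i)"
  have dval: "d (\<tau> j') (\<tau> j) = cnj (u j') * v j" if "j' \<in> F1" "j \<in> F1" for j' j
  proof -
    have "d (\<tau> j') (\<tau> j) = (\<Sum>i'\<in>F1. if i' = j' then (\<Sum>i\<in>F1. if i = j then cnj (u i') * v i else 0) else 0)"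
      unfolding d_def by (intro sum.cong refl) (auto simp: Wm_val that intro!: sum.cong)
    also have "\<dots> = cnj (u j') * v j" using f1 that by simp
    finally show ?thesis .
  qed
  define t where "t = (\<Sum>j\<in>F1. v j * x (\<tau> j))"
  have "(\<Sum>k'\<in>\<tau> ` F1. (cmod (\<Sum>k\<in>\<tau> ` F1. d k' k * x k))^2)
       = (\<Sum>j'\<in>F1. (cmod (\<Sum>j\<in>F1. d (\<tau> j') (\<tau> j) * x (\<tau> j)))^2)"
    by (simp add: sum.reindex[OF inj])
  also have "\<dots> = (\<Sum>j'\<in>F1. (cmod (cnj (u j') * t))^2)"
    unfolding t_def by (intro sum.cong refl) (auto simp: dval sum_distrib_left mult.assoc intro!: sum.cong)
  also have "\<dots> = nsq F1 u * (cmod t)^2"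
    unfolding nsq_def by (simp add: norm_mult power_mult_distrib sum_distrib_right)
  also have "\<dots> \<le> (cmod t)^2" using nu nsq_nonneg[of F1 u] by (simp add: mult_left_le_one_le)
  also have "\<dots> \<le> nsq F1 v * nsq F1 (\<lambda>j. x (\<tau> j))" unfolding t_def by (rule cs_complex[OF f1])
  also have "\<dots> \<le> nsq F1 (\<lambda>j. x (\<tau> j))" using nv nsq_nonneg[of F1 v] nsq_nonneg[of F1 "\<lambda>j. x (\<tau> j)"]
    by (simp add: mult_left_le_one_le)
  also have "\<dots> = (\<Sum>k\<in>\<tau> ` F1. (cmod (x k))^2)" unfolding nsq_def by (simp add: sum.reindex[OF inj])
  finally show "(\<Sum>k'\<in>\<tau> ` F1. (cmod (\<Sum>k\<in>\<tau> ` F1. (\<Sum>i'\<in>F1. \<Sum>i\<in>F1. cnj (u i') * Wm F1 \<tau> (i',k') (i,k) * v i) * x k))^2)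
      \<le> (\<Sum>k\<in>\<tau> ` F1. (cmod (x k))^2)" unfolding d_def .
qed

end


context
  fixes F1 :: "'a set" and \<tau> :: "'a \<Rightarrow> 'b"
  assumes f1: "finite F1" and inj: "inj_on \<tau> F1" and ne: "F1 \<noteq> {}"
begin

lemma trm_rho_W: "trm (F1 \<times> \<tau> ` F1) (rho F1 \<tau>) (Wm F1 \<tau>) = of_nat (card F1)"
proof -
  let ?G = "F1 \<times> \<tau> ` F1" and ?S = "Sset F1 \<tau>"
  have "trm ?G (rho F1 \<tau>) (Wm F1 \<tau>) = (\<Sum>p\<in>?G. \<Sum>q\<in>?G. if q \<in> ?S then (if p \<in> ?S then 1 / of_nat (card F1) else 0) else 0)"
    unfolding trm_def rho_def Wm_def by (intro sum.cong refl) auto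
  also have "\<dots> = (\<Sum>p\<in>?G. of_nat (card F1) * (if p \<in> ?S then 1 / of_nat (card F1) else 0))"
    by (intro sum.cong refl) (rule sum_S_ind[OF f1 inj ne])
  also have "\<dots> = (\<Sum>p\<in>?G. if p \<in> ?S then 1 else 0)"
    using n_pos[OF f1 inj ne] by (intro sum.cong refl) auto
  also have "\<dots> = of_nat (card F1) * 1" by (rule sum_S_ind[OF f1 inj ne])
  finally show ?thesis by simp
qed

lemma lower:
  assumes sd: "std_decomp (rho F1 \<tau>) r X Y"
  shows "real (card F1) \<le> suminf r"
proof -
  let ?G = "F1 \<times> \<tau> ` F1"
  let ?n = "card F1"
  have npos: "?n > 0" by (rule n_pos[OF f1 inj ne])
  have r0: "\<And>k. 0 \<le> r k" and sr: "summable r"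
    and tcX: "\<And>k. trace_class (X k)" and tcY: "\<And>k. trace_class (Y k)"
    and prod1: "\<And>k. trace_norm (X k) * trace_norm (Y k) = 1"
    and lim: "(\<lambda>N. trace_norm (\<lambda>p q. rho F1 \<tau> p q - (\<Sum>k<N. complex_of_real (r k) * tensor (X k) (Y k) p q))) \<longlonglongrightarrow> 0"
    using sd unfolding std_decomp_def by auto
  define A where "A = (\<lambda>N p q. rho F1 \<tau> p q - (\<Sum>k<N. complex_of_real (r k) * tensor (X k) (Y k) p q))"
  have hW: "Wm F1 \<tau> = (\<lambda>p q. of_nat ?n * rho F1 \<tau> p q)"
    using npos unfolding Wm_def rho_def by (auto simp: fun_eq_iff)
  have tcA: "trace_class (A N)" for N
    unfolding A_def by (rule tc_diff[OF rho_tc[OF f1 inj ne] tc_sum[OF tensor_tc[OF tcX tcY]]])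
  have b1: "cmod (trm ?G (A N) (Wm F1 \<tau>)) \<le> ?n * trace_norm (A N)" for N
  proof -
    have "trm ?G (A N) (Wm F1 \<tau>) = of_nat ?n * trm ?G (A N) (rho F1 \<tau>)"
      unfolding hW by (rule trm_scale2)
    then show ?thesis using tn_le[OF fG[OF f1 inj ne] rho_contr[OF f1 inj ne] tcA[of N]]
      by (simp add: norm_mult mult_left_mono)
  qed
  have b2: "cmod (trm ?G (tensor (X k) (Y k)) (Wm F1 \<tau>)) \<le> 1" for k
  proof -
    have nx: "0 \<le> trace_norm (X k)" using tn_nonneg[OF tcX] .
    have ny: "0 \<le> trace_norm (Y k)" using tn_nonneg[OF tcY] .
    have Mpos: "trace_norm (Y k) > 0" using prod1[of k] nx ny
      by (metis less_eq_real_def mult_zero_right zero_neq_one)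
    have "cmod (trm ?G (tensor (X k) (Y k)) (Wm F1 \<tau>)) \<le> trace_norm (Y k) * trace_norm (X k)"
      by (rule tensor_bound[OF f1 _ Wm_supp[OF f1 inj ne] Wm_dcon[OF f1 inj ne] tcX tcY Mpos])
         (use f1 in auto)
    then show ?thesis using prod1[of k] by (simp add: mult.commute)
  qed
  have key: "real ?n \<le> ?n * trace_norm (A N) + suminf r" for N
  proof -
    have eq: "trm ?G (rho F1 \<tau>) (Wm F1 \<tau>) = trm ?G (A N) (Wm F1 \<tau>)
         + (\<Sum>k<N. complex_of_real (r k) * trm ?G (tensor (X k) (Y k)) (Wm F1 \<tau>))"
      unfolding A_def trm_diff
      using trm_sum[where F="?G" and N=N and t="\<lambda>k p q. complex_of_real (r k) * tensor (X k) (Y k) p q" and c="Wm F1 \<tau>"]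
      by (simp add: trm_scale)
    have "real ?n = cmod (trm ?G (rho F1 \<tau>) (Wm F1 \<tau>))" unfolding trm_rho_W by simp
    also have "\<dots> \<le> cmod (trm ?G (A N) (Wm F1 \<tau>))
         + cmod (\<Sum>k<N. complex_of_real (r k) * trm ?G (tensor (X k) (Y k)) (Wm F1 \<tau>))"
      unfolding eq by (rule norm_triangle_ineq)
    also have "\<dots> \<le> ?n * trace_norm (A N) + (\<Sum>k<N. r k)"
    proof (rule add_mono[OF b1])
      have "cmod (\<Sum>k<N. complex_of_real (r k) * trm ?G (tensor (X k) (Y k)) (Wm F1 \<tau>))
          \<le> (\<Sum>k<N. cmod (complex_of_real (r k) * trm ?G (tensor (X k) (Y k)) (Wm F1 \<tau>)))"
        by (rule norm_sum)
      also have "\<dots> \<le> (\<Sum>k<N. r k)"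
      proof (rule sum_mono)
        fix k
        show "cmod (complex_of_real (r k) * trm ?G (tensor (X k) (Y k)) (Wm F1 \<tau>)) \<le> r k"
          using b2[of k] r0[of k] by (simp add: norm_mult mult_left_le)
      qed
      finally show "cmod (\<Sum>k<N. complex_of_real (r k) * trm ?G (tensor (X k) (Y k)) (Wm F1 \<tau>)) \<le> (\<Sum>k<N. r k)" .
    qed
    also have "\<dots> \<le> ?n * trace_norm (A N) + suminf r"
      using sum_le_suminf[OF sr, of "{..<N}"] r0 by simp
    finally show ?thesis .
  qed
  have limA: "(\<lambda>N. trace_norm (A N)) \<longlonglongrightarrow> 0" using lim unfolding A_def .
  have "(\<lambda>N. real ?n * trace_norm (A N) + suminf r) \<longlonglongrightarrow> real ?n * 0 + suminf r"
    by (intro tendsto_add tendsto_mult_left limA tendsto_const)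
  then show ?thesis using key by (intro LIMSEQ_le_const) auto
qed

end


context
  fixes F1 :: "'a set" and \<tau> :: "'a \<Rightarrow> 'b"
  assumes f1: "finite F1" and inj: "inj_on \<tau> F1" and ne: "F1 \<noteq> {}"
begin

lemma ind_sum: "(\<Sum>j\<in>F1. if q = (j, \<tau> j) then c else 0) = (if q \<in> Sset F1 \<tau> then c else 0)"
proof -
  have "(\<Sum>j\<in>F1. if q = (j, \<tau> j) then c else 0) = (\<Sum>j\<in>F1. if j = fst q then (if snd q = \<tau> (fst q) then c else 0) else 0)"
    by (intro sum.cong refl) (cases q, auto)
  also have "\<dots> = (if q \<in> Sset F1 \<tau> then c else 0)" using f1 by (simp add: memS[OF f1 inj ne])
  finally show ?thesis .
qed

lemma rho_decomp: "\<exists>r X Y. std_decomp (rho F1 \<tau>) r X Y"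
proof -
  let ?n = "card F1"
  have npos: "?n > 0" by (rule n_pos[OF f1 inj ne])
  define m where "m = card (F1 \<times> F1)"
  obtain e where e: "bij_betw e {0..<m} (F1 \<times> F1)" unfolding m_def using ex_bij_betw_nat_finite[of "F1 \<times> F1"] f1 by auto
  define r where "r = (\<lambda>k. if k < m then 1 / real ?n else 0)"
  define X where "X = (\<lambda>k. munit (fst (e k)) (snd (e k)))"
  define Y where "Y = (\<lambda>k. munit (\<tau> (fst (e k))) (\<tau> (snd (e k))))"
  have sumeq: "(\<Sum>k<N. complex_of_real (r k) * tensor (X k) (Y k) p q) = rho F1 \<tau> p q" if "N \<ge> m" for N p q
  proof -
    have "(\<Sum>k<N. complex_of_real (r k) * tensor (X k) (Y k) p q) = (\<Sum>k\<in>{0..<m}. complex_of_real (r k) * tensor (X k) (Y k) p q)"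
      by (rule sum.mono_neutral_right) (use that in \<open>auto simp: r_def\<close>)
    also have "\<dots> = (\<Sum>k\<in>{0..<m}. complex_of_real (1 / real ?n) * (\<lambda>(i,j). tensor (munit i j) (munit (\<tau> i) (\<tau> j)) p q) (e k))"
      unfolding r_def X_def Y_def by (intro sum.cong refl) (auto simp: case_prod_beta)
    also have "\<dots> = complex_of_real (1 / real ?n) * (\<Sum>x\<in>F1 \<times> F1. (\<lambda>(i,j). tensor (munit i j) (munit (\<tau> i) (\<tau> j)) p q) x)"
      unfolding sum_distrib_left[symmetric] by (simp add: sum.reindex_bij_betw[OF e])
    also have "(\<Sum>x\<in>F1 \<times> F1. (\<lambda>(i,j). tensor (munit i j) (munit (\<tau> i) (\<tau> j)) p q) x)
        = (\<Sum>i\<in>F1. \<Sum>j\<in>F1. if p = (i, \<tau> i) then (if q = (j, \<tau> j) then 1 else 0) else 0)"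
      unfolding sum_prod tensor_munit by (intro sum.cong refl) auto
    also have "\<dots> = (\<Sum>i\<in>F1. if p = (i, \<tau> i) then (if q \<in> Sset F1 \<tau> then 1 else 0) else 0)"
      by (intro sum.cong refl) (auto simp: ind_sum)
    also have "\<dots> = (if p \<in> Sset F1 \<tau> then (if q \<in> Sset F1 \<tau> then 1 else 0) else 0)"
      by (rule ind_sum)
    finally show ?thesis unfolding rho_def by auto
  qed
  have "std_decomp (rho F1 \<tau>) r X Y"
    unfolding std_decomp_def
  proof (intro conjI allI)
    show "\<And>k. 0 \<le> r k" unfolding r_def by auto
    show "summable r" by (rule summable_finite[of "{..<m}"]) (auto simp: r_def)
    show "\<And>k. trace_class (X k)" "\<And>k. trace_class (Y k)" unfolding X_def Y_def by (auto intro: munit_tc)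
    show "\<And>k. trace_norm (X k) * trace_norm (Y k) = 1" unfolding X_def Y_def by (simp add: munit_tn)
    show "(\<lambda>n. trace_norm (\<lambda>p q. rho F1 \<tau> p q - (\<Sum>k<n. complex_of_real (r k) * tensor (X k) (Y k) p q))) \<longlonglongrightarrow> 0"
    proof (rule tendsto_eventually)
      show "\<forall>\<^sub>F n in sequentially. trace_norm (\<lambda>p q. rho F1 \<tau> p q - (\<Sum>k<n. complex_of_real (r k) * tensor (X k) (Y k) p q)) = 0"
        unfolding eventually_sequentially
        by (rule exI[of _ m]) (simp add: sumeq tn_zero)
    qed
  qed
  then show ?thesis by blast
qed

lemma rho_cross: "rho F1 \<tau> \<in> cross_states"
  unfolding cross_states_def cross_trace_class_def
  using rho_density[OF f1 inj ne] rho_tc[OF f1 inj ne] rho_decomp by blast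

lemma rho_proj: "ereal (real (card F1)) \<le> proj_norm (rho F1 \<tau>)"
  unfolding proj_norm_def by (rule Inf_greatest) (auto intro: lower[OF f1 inj ne])

end


lemma big_state:
  assumes "infinite (UNIV :: 'a::countable set)" and "infinite (UNIV :: 'b::countable set)"
    and n1: "n \<ge> (1::nat)"
  shows "\<exists>D \<in> (cross_states :: ('a \<times> 'b) mat set). ereal (real n) \<le> proj_norm D"
proof -
  obtain F1 :: "'a set" where F1: "finite F1" "card F1 = n" using infinite_arbitrarily_large[OF assms(1)] by blast
  obtain F2 :: "'b set" where F2: "finite F2" "card F2 = n" using infinite_arbitrarily_large[OF assms(2)] by blast
  obtain \<tau> where tau: "bij_betw \<tau> F1 F2" using finite_same_card_bij[OF F1(1) F2(1)] F1 F2 by auto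
  have inj: "inj_on \<tau> F1" using tau bij_betw_def by blast
  have ne: "F1 \<noteq> {}" using F1 n1 by auto
  show ?thesis using rho_cross[OF F1(1) inj ne] rho_proj[OF F1(1) inj ne] F1(2) by blast
qed

theorem corollary3p29:
  assumes "infinite (UNIV :: 'a::countable set)"
      and "infinite (UNIV :: 'b::countable set)"
  shows "(SUP D \<in> (cross_states :: ('a \<times> 'b) mat set). proj_norm D) = \<infinity> \<and>
         (SUP D \<in> (cross_states :: ('a \<times> 'b) mat set). proj_norm_sa D) = \<infinity>"
proof -
  have top1: "(SUP D \<in> (cross_states :: ('a \<times> 'b) mat set). proj_norm D) = top"
  proof (subst SUP_eq_top_iff, intro allI impI)
    fix x :: ereal assume "x < top"
    then obtain n :: nat where n: "n \<ge> 1" "x < ereal (real n)"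
    proof (cases x)
      case (real t)
      obtain k :: nat where "t < real k" using reals_Archimedean2 by blast
      then show ?thesis using that[of "k + 1"] real by auto
    next
      case PInf then show ?thesis using \<open>x < top\<close> by simp
    next
      case MInf then show ?thesis using that[of 1] by simp
    qed
    obtain D where "D \<in> (cross_states :: ('a \<times> 'b) mat set)" "ereal (real n) \<le> proj_norm D"
      using big_state[OF assms n(1)] by blast
    then show "\<exists>D\<in>(cross_states :: ('a \<times> 'b) mat set). x < proj_norm D" using n(2) by (meson less_le_trans)
  qed
  have le: "proj_norm D \<le> proj_norm_sa D" for D :: "('a \<times> 'b) mat"
    unfolding proj_norm_def proj_norm_sa_def by (rule Inf_superset_mono) blast
  have "(SUP D \<in> (cross_states :: ('a \<times> 'b) mat set). proj_norm D)
      \<le> (SUP D \<in> (cross_states :: ('a \<times> 'b) mat set). proj_norm_sa D)"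
    by (rule SUP_mono) (use le in blast)
  then have top2: "(SUP D \<in> (cross_states :: ('a \<times> 'b) mat set). proj_norm_sa D) = top"
    using top1 by (simp add: top_unique)
  show ?thesis using top1 top2 unfolding top_ereal_def by (simp only:)
qed


end
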